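(* Let $m, n_0, n_1$ be positive integers and $n(\lambda) = n_0 + n_1\lambda$. Let $x_0, y_0, z_0$ be positive rational numbers with $m/n_0 = 1/x_0 + 1/y_0 + 1/z_0$. Consider polynomials $x(\lambda), y(\lambda), z(\lambda)$ with rational coefficients and constant terms $x(0) = x_0$, $y(0) = y_0$, $z(0) = z_0$, such that $x$ and $z$ have degree $1$, $y$ has degree $2$, and $$\frac{m}{n(\lambda)} = \frac{1}{x(\lambda)} + \frac{1}{y(\lambda)} + \frac{1}{z(\lambda)}$$ holds identically in $\lambda$. Up to interchanging the roles of $x$ and $z$, there are exactly two such solutions, namely $$z_+(\lambda) = z_0 + \frac{n_1}{n_0}\frac{y_0 z_0}{y_0 + z_0}\lambda,\quad x_+(\lambda) = x_0 + x_0\frac{n_1}{n_0}\lambda,\quad y_+(\lambda) = y_0 + y_0\frac{n_1}{n_0}\Big(1 + \frac{y_0}{y_0+z_0}\Big)\lambda + \Big(y_0\frac{n_1}{n_0}\Big)^2\frac{1}{y_0+z_0}\lambda^2,$$ and $$z_-(\lambda) = z_0 + \frac{n_1}{m}\frac{x_0+z_0}{x_0}\lambda,\quad x_-(\lambda) = x_0 + \frac{n_1}{m}\frac{x_0+z_0}{z_0}\lambda,\quad y_-(\lambda) = y_0 + \Big(\frac{2 y_0 n_1}{n_0} - \frac{n_1}{m}\Big)\lambda + \frac{n_1}{n_0}\Big(\frac{y_0 n_1}{n_0} - \frac{n_1}{m}\Big)\lambda^2 .$$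
   Context: $\lambda$ is an indeterminate; the equation is an identity of rational functions in $\lambda$. *)

theory Defs
  imports "HOL-Computational_Algebra.Polynomial" "HOL-Computational_Algebra.Fraction_Field"
begin

definition egypt_identity :: "rat \<Rightarrow> rat poly \<Rightarrow> rat poly \<Rightarrow> rat poly \<Rightarrow> rat poly \<Rightarrow> bool" where
  "egypt_identity m n x y z \<longleftrightarrow>
     Fract [:m:] 1 / Fract n 1 =
       inverse (Fract x 1) + inverse (Fract y 1) + inverse (Fract z 1)"

definition sol_plus :: "rat \<Rightarrow> rat \<Rightarrow> rat \<Rightarrow> rat \<Rightarrow> rat \<Rightarrow> rat poly \<times> rat poly \<times> rat poly" where
  "sol_plus n0 n1 x0 y0 z0 =
     ([:x0, x0 * (n1 / n0):],
      [:y0, y0 * (n1 / n0) * (1 + y0 / (y0 + z0)), (y0 * (n1 / n0))^2 * (1 / (y0 + z0)):],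
      [:z0, (n1 / n0) * (y0 * z0 / (y0 + z0)):])"

definition sol_minus :: "rat \<Rightarrow> rat \<Rightarrow> rat \<Rightarrow> rat \<Rightarrow> rat \<Rightarrow> rat \<Rightarrow> rat poly \<times> rat poly \<times> rat poly" where
  "sol_minus m n0 n1 x0 y0 z0 =
     ([:x0, (n1 / m) * ((x0 + z0) / z0):],
      [:y0, 2 * y0 * n1 / n0 - n1 / m, (n1 / n0) * (y0 * n1 / n0 - n1 / m):],
      [:z0, (n1 / m) * ((x0 + z0) / x0):])"

definition swap_xz :: "'a \<times> 'b \<times> 'a \<Rightarrow> 'a \<times> 'b \<times> 'a" where
  "swap_xz t = (case t of (a, b, c) \<Rightarrow> (c, b, a))"

end

theory Submission
  imports Defs
begin

lemma deg2_form: "degree (p::'a::zero poly) \<le> 2 \<Longrightarrow> p = [:coeff p 0, coeff p 1, coeff p 2:]"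
  apply (rule poly_eqI)
  apply (auto simp: coeff_pCons coeff_eq_0 numeral_2_eq_2 split: nat.split)
  done

lemma deg1_form: "degree (p::'a::zero poly) \<le> 1 \<Longrightarrow> p = [:coeff p 0, coeff p 1:]"
  apply (rule poly_eqI)
  apply (auto simp: coeff_pCons coeff_eq_0 split: nat.split)
  done

lemma uniq:
  fixes M :: rat and N x y y' z :: "rat poly"
  assumes "smult M (x*y*z) = N*(y*z + x*z + x*y)"
    and "smult M (x*y'*z) = N*(y'*z + x*z + x*y')"
    and "poly (smult M (x*z) - N*(x+z)) 0 \<noteq> 0"
  shows "y = y'"
proof -
  have h: "w * (smult M (x*z) - N*(x+z)) = N*(x*z)"
    if "smult M (x*w*z) = N*(w*z + x*z + x*w)" for w
  proof -
    have "w * (smult M (x*z) - N*(x+z)) = smult M (x*w*z) - N*(w*z + x*w)"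
      by (simp add: algebra_simps)
    also have "\<dots> = N*(x*z)" unfolding that by (simp add: algebra_simps)
    finally show ?thesis .
  qed
  have "(y - y') * (smult M (x*z) - N*(x+z)) = 0"
    using h[OF assms(1)] h[OF assms(2)] by (simp add: left_diff_distrib)
  moreover have "smult M (x*z) - N*(x+z) \<noteq> 0" using assms(3) by (metis poly_0)
  ultimately show ?thesis by simp
qed

lemma three_roots:
  fixes y0 b1 b2 r s u :: rat
  assumes "y0 + b1*r + b2*r^2 = 0" "y0 + b1*s + b2*s^2 = 0" "y0 + b1*u + b2*u^2 = 0"
    and "r \<noteq> s" "r \<noteq> u" "s \<noteq> u"
  shows "b2 = 0"
proof -
  have "(r-s)*(b1 + b2*(r+s)) = 0" using assms(1,2) by algebra
  then have 1: "b1 + b2*(r+s) = 0" using assms(4) by simp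
  have "(r-u)*(b1 + b2*(r+u)) = 0" using assms(1,3) by algebra
  then have 2: "b1 + b2*(r+u) = 0" using assms(5) by simp
  have "b2*(s-u) = 0" using 1 2 by algebra
  then show ?thesis using assms(6) by simp
qed

lemma ver_plus:
  fixes M n0 n1 x0 y0 z0 :: rat
  assumes "n0 > 0" "x0 > 0" "y0 > 0" "z0 > 0"
    and M: "M = n0 * (1/x0 + 1/y0 + 1/z0)"
    and "(x,y,z) = sol_plus n0 n1 x0 y0 z0"
  shows "smult M (x*y*z) = [:n0,n1:]*(y*z + x*z + x*y)"
proof -
  have nz: "n0 \<noteq> 0" "x0 \<noteq> 0" "y0 \<noteq> 0" "z0 \<noteq> 0" "y0 + z0 \<noteq> 0" using assms by auto
  define k where "k = n1/n0"
  define w where "w = 1/(y0+z0)"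
  have hk: "n1 = k*n0" using nz by (simp add: k_def)
  have hw: "w*(y0+z0) = 1" using nz by (simp add: w_def)
  have hM: "M*x0*y0*z0 = n0*(y0*z0+x0*z0+x0*y0)" using nz by (simp add: M field_simps)
  have xyz: "x = [:x0, x0*k:]" "y = [:y0, y0*k*(1+y0*w), (y0*k)^2*w:]" "z = [:z0, k*(y0*z0*w):]"
    using assms(6) by (simp_all add: sol_plus_def k_def w_def)
  show ?thesis
    unfolding xyz
    apply (simp add: algebra_simps)
    using hk hw hM
    apply (intro conjI)
    apply (algebra)+
    done
qed
lemma ver_minus:
  fixes M n0 n1 x0 y0 z0 :: rat
  assumes "n0 > 0" "x0 > 0" "y0 > 0" "z0 > 0"
    and M: "M = n0 * (1/x0 + 1/y0 + 1/z0)"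
    and "(x,y,z) = sol_minus M n0 n1 x0 y0 z0"
  shows "smult M (x*y*z) = [:n0,n1:]*(y*z + x*z + x*y)"
proof -
  have nz: "n0 \<noteq> 0" "x0 \<noteq> 0" "y0 \<noteq> 0" "z0 \<noteq> 0" "M \<noteq> 0"
  proof -
    show "n0 \<noteq> 0" "x0 \<noteq> 0" "y0 \<noteq> 0" "z0 \<noteq> 0" using assms by auto
    have "M > 0" unfolding M using assms by (intro mult_pos_pos add_pos_pos) auto
    then show "M \<noteq> 0" by simp
  qed
  define k where "k = n1/M"
  define j where "j = n1/n0"
  define p where "p = 1/x0"
  define q where "q = 1/z0"
  have hk: "n1 = k*M" using nz by (simp add: k_def)
  have hj: "n1 = j*n0" using nz by (simp add: j_def)
  have hp: "p*x0 = 1" using nz by (simp add: p_def)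
  have hq: "q*z0 = 1" using nz by (simp add: q_def)
  have hM: "M*x0*y0*z0 = n0*(y0*z0+x0*z0+x0*y0)" using nz by (simp add: M field_simps)
  have xyz: "x = [:x0, k*((x0+z0)*q):]" "y = [:y0, 2*y0*j - k, j*(y0*j - k):]" "z = [:z0, k*((x0+z0)*p):]"
    using assms(6) by (simp_all add: sol_minus_def k_def j_def p_def q_def)
  show ?thesis
    unfolding xyz
    apply (simp add: algebra_simps)
    using hk hj hp hq hM
    apply (intro conjI)
    apply (algebra)+
    done
qed

lemma get_E4:
  fixes M n0 n1 x0 y0 z0 a c b1 b2 :: rat
  assumes P: "smult M ([:x0,a:]*[:y0,b1,b2:]*[:z0,c:]) = [:n0,n1:]*([:y0,b1,b2:]*[:z0,c:] + [:x0,a:]*[:z0,c:] + [:x0,a:]*[:y0,b1,b2:])"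
    and "b2 \<noteq> 0"
  shows "M*a*c = n1*(a+c)"
proof -
  have "M * (a * (b2 * c)) = a * (b2 * n1) + b2 * (c * n1)"
    using P by (simp add: algebra_simps)
  then have "b2 * (M*a*c - n1*(a+c)) = 0" by (simp add: algebra_simps)
  then show ?thesis using assms(2) by simp
qed

lemma caseA:
  fixes M n0 n1 x0 y0 z0 a c b1 b2 :: rat
  assumes pos: "n0 > 0" "n1 > 0" "x0 > 0" "y0 > 0" "z0 > 0"
    and M: "M = n0 * (1/x0 + 1/y0 + 1/z0)"
    and b2: "b2 \<noteq> 0"
    and P: "smult M ([:x0,a:]*[:y0,b1,b2:]*[:z0,c:]) = [:n0,n1:]*([:y0,b1,b2:]*[:z0,c:] + [:x0,a:]*[:z0,c:] + [:x0,a:]*[:y0,b1,b2:])"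
    and ha: "a*n0 = x0*n1"
  shows "([:x0,a:],[:y0,b1,b2:],[:z0,c:]) = sol_plus n0 n1 x0 y0 z0"
proof -
  have E4: "M*a*c = n1*(a+c)" using get_E4[OF P b2] .
  have "n1*(c*(M*x0-n0) - x0*n1) = 0" using E4 ha by algebra
  then have c1: "c*(M*x0-n0) = x0*n1" using pos by simp
  have Mx: "M*x0 - n0 = n0*x0*(y0+z0)/(y0*z0)" using pos by (simp add: M field_simps)
  have Mx0: "M*x0 - n0 \<noteq> 0" unfolding Mx using pos by (simp add: add_pos_pos)
  have hc: "c = (n1/n0)*(y0*z0/(y0+z0))"
  proof -
    have "c = x0*n1/(M*x0-n0)" using c1 Mx0 by (simp add: field_simps)
    also have "\<dots> = (n1/n0)*(y0*z0/(y0+z0))"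
    proof -
      have "n0*(x0*y0) + n0*(x0*z0) > 0" "n0*y0+n0*z0 > 0" using pos by (simp_all add: add_pos_pos)
      then show ?thesis unfolding Mx using pos by (simp add: field_simps)
    qed
    finally show ?thesis .
  qed
  have hx: "a = x0*(n1/n0)" using ha pos by (simp add: field_simps)
  obtain y' where y': "sol_plus n0 n1 x0 y0 z0 = ([:x0,a:], y', [:z0,c:])"
    unfolding sol_plus_def hx hc by simp
  have V: "smult M ([:x0,a:]*y'*[:z0,c:]) = [:n0,n1:]*(y'*[:z0,c:] + [:x0,a:]*[:z0,c:] + [:x0,a:]*y')"
    by (rule ver_plus[OF pos(1) pos(3-5) M y'[symmetric]])
  have D: "poly (smult M ([:x0,a:]*[:z0,c:]) - [:n0,n1:]*([:x0,a:]+[:z0,c:])) 0 \<noteq> 0"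
  proof -
    have "poly (smult M ([:x0,a:]*[:z0,c:]) - [:n0,n1:]*([:x0,a:]+[:z0,c:])) 0 = n0*x0*z0/y0"
      using pos by (simp add: M field_simps)
    then show ?thesis using pos by simp
  qed
  have "[:y0,b1,b2:] = y'" by (rule uniq[OF P V D])
  then show ?thesis using y' by simp
qed

lemma caseC:
  fixes M n0 n1 x0 y0 z0 a c b1 b2 :: rat
  assumes pos: "n0 > 0" "n1 > 0" "x0 > 0" "y0 > 0" "z0 > 0"
    and M: "M = n0 * (1/x0 + 1/y0 + 1/z0)"
    and b2: "b2 \<noteq> 0" and a: "a \<noteq> 0" and c: "c \<noteq> 0"
    and P: "smult M ([:x0,a:]*[:y0,b1,b2:]*[:z0,c:]) = [:n0,n1:]*([:y0,b1,b2:]*[:z0,c:] + [:x0,a:]*[:z0,c:] + [:x0,a:]*[:y0,b1,b2:])"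
    and hac: "a*z0 = c*x0"
  shows "([:x0,a:],[:y0,b1,b2:],[:z0,c:]) = sol_minus M n0 n1 x0 y0 z0"
proof -
  have Mpos: "M > 0" unfolding M using pos by (intro mult_pos_pos add_pos_pos) auto
  have E4: "M*a*c = n1*(a+c)" using get_E4[OF P b2] .
  have "a*(M*a*z0 - n1*(x0+z0)) = 0" using E4 hac by algebra
  then have "M*a*z0 = n1*(x0+z0)" using a by simp
  then have hx: "a = (n1/M)*((x0+z0)/z0)" using Mpos pos by (simp add: field_simps)
  have "c*(M*c*x0 - n1*(x0+z0)) = 0" using E4 hac by algebra
  then have "M*c*x0 = n1*(x0+z0)" using c by simp
  then have hc: "c = (n1/M)*((x0+z0)/x0)" using Mpos pos by (simp add: field_simps)
  obtain y' where y': "sol_minus M n0 n1 x0 y0 z0 = ([:x0,a:], y', [:z0,c:])"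
    unfolding sol_minus_def hx hc by simp
  have V: "smult M ([:x0,a:]*y'*[:z0,c:]) = [:n0,n1:]*(y'*[:z0,c:] + [:x0,a:]*[:z0,c:] + [:x0,a:]*y')"
    by (rule ver_minus[OF pos(1) pos(3-5) M y'[symmetric]])
  have D: "poly (smult M ([:x0,a:]*[:z0,c:]) - [:n0,n1:]*([:x0,a:]+[:z0,c:])) 0 \<noteq> 0"
  proof -
    have "poly (smult M ([:x0,a:]*[:z0,c:]) - [:n0,n1:]*([:x0,a:]+[:z0,c:])) 0 = n0*x0*z0/y0"
      using pos by (simp add: M field_simps)
    then show ?thesis using pos by simp
  qed
  have "[:y0,b1,b2:] = y'" by (rule uniq[OF P V D])
  then show ?thesis using y' by simp
qed


lemma rootlemma:
  fixes M n0 n1 x0 y0 z0 a c b1 b2 :: rat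
  assumes n1: "n1 \<noteq> 0" and Mz: "M \<noteq> 0"
    and b2: "b2 \<noteq> 0" and a: "a \<noteq> 0" and c: "c \<noteq> 0"
    and P: "smult M ([:x0,a:]*[:y0,b1,b2:]*[:z0,c:]) = [:n0,n1:]*([:y0,b1,b2:]*[:z0,c:] + [:x0,a:]*[:z0,c:] + [:x0,a:]*[:y0,b1,b2:])"
    and hxr: "a*n0 \<noteq> x0*n1" and hzr: "c*n0 \<noteq> z0*n1"
  shows "a*z0 = c*x0"
proof (rule ccontr)
  assume nc: "a*z0 \<noteq> c*x0"
  define X where "X = [:x0,a:]"
  define Y where "Y = [:y0,b1,b2:]"
  define Z where "Z = [:z0,c:]"
  define N where "N = [:n0,n1:]"
  have ev: "M * (poly X t * poly Y t * poly Z t) = poly N t * (poly Y t * poly Z t + poly X t * poly Z t + poly X t * poly Y t)" for t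
  proof -
    have "poly (smult M (X*Y*Z)) t = poly (N*(Y*Z + X*Z + X*Y)) t" using P by (simp only: X_def Y_def Z_def N_def)
    then show ?thesis by (simp only: poly_smult poly_mult poly_add)
  qed
  have Yt: "poly Y t = y0 + b1*t + b2*t^2" for t by (simp add: Y_def algebra_simps power2_eq_square)
  define r where "r = -n0/n1"
  define s where "s = -x0/a"
  define u where "u = -z0/c"
  have Nr: "poly N r = 0" using n1 by (simp add: N_def r_def)
  have Xr: "poly X r \<noteq> 0"
  proof
    assume "poly X r = 0"
    then have "x0*n1 - a*n0 = 0" using n1 by (simp add: X_def r_def field_simps)
    then show False using hxr by simp
  qed
  have Zr: "poly Z r \<noteq> 0"
  proof
    assume "poly Z r = 0"
    then have "z0*n1 - c*n0 = 0" using n1 by (simp add: Z_def r_def field_simps)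
    then show False using hzr by simp
  qed
  have Yr: "poly Y r = 0" using ev[of r] Nr Xr Zr Mz by simp
  have Xs: "poly X s = 0" using a by (simp add: X_def s_def)
  have Ns: "poly N s \<noteq> 0"
  proof
    assume "poly N s = 0"
    then have "n0*a - n1*x0 = 0" using a by (simp add: N_def s_def field_simps)
    then show False using hxr by (simp add: algebra_simps)
  qed
  have Zs: "poly Z s \<noteq> 0"
  proof
    assume "poly Z s = 0"
    then have "z0*a - c*x0 = 0" using a by (simp add: Z_def s_def field_simps)
    then show False using nc by (simp add: algebra_simps)
  qed
  have Ys: "poly Y s = 0" using ev[of s] Ns Xs Zs by simp
  have Zu: "poly Z u = 0" using c by (simp add: Z_def u_def)
  have Nu: "poly N u \<noteq> 0"
  proof
    assume "poly N u = 0"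
    then have "n0*c - n1*z0 = 0" using c by (simp add: N_def u_def field_simps)
    then show False using hzr by (simp add: algebra_simps)
  qed
  have Xu: "poly X u \<noteq> 0"
  proof
    assume "poly X u = 0"
    then have "x0*c - a*z0 = 0" using c by (simp add: X_def u_def field_simps)
    then show False using nc by (simp add: algebra_simps)
  qed
  have Yu: "poly Y u = 0" using ev[of u] Nu Xu Zu by simp
  have rs: "r \<noteq> s"
  proof
    assume "r = s"
    then have "n0*a = x0*n1" using a n1 by (simp add: r_def s_def field_simps)
    then show False using hxr by (simp add: algebra_simps)
  qed
  have ru: "r \<noteq> u"
  proof
    assume "r = u"
    then have "n0*c = z0*n1" using c n1 by (simp add: r_def u_def field_simps)
    then show False using hzr by (simp add: algebra_simps)
  qed
  have su: "s \<noteq> u"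
  proof
    assume "s = u"
    then have "x0*c = z0*a" using c a by (simp add: s_def u_def field_simps)
    then show False using nc by (simp add: algebra_simps)
  qed
  have "b2 = 0" using three_roots Yr Ys Yu rs ru su unfolding Yt by blast
  then show False using b2 by simp
qed

lemma ident_iff:
  fixes M :: rat and N x y z :: "rat poly"
  assumes "N \<noteq> 0" "x \<noteq> 0" "y \<noteq> 0" "z \<noteq> 0"
  shows "egypt_identity M N x y z \<longleftrightarrow> smult M (x*y*z) = N*(y*z + x*z + x*y)"
  using assms by (simp add: egypt_identity_def eq_fract algebra_simps)

theorem lemma6:
  fixes m n0 n1 :: nat and x0 y0 z0 :: rat and x y z :: "rat poly"
  assumes "m > 0" and "n0 > 0" and "n1 > 0"
    and "x0 > 0" and "y0 > 0" and "z0 > 0"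
    and "of_nat m / of_nat n0 = 1 / x0 + 1 / y0 + 1 / z0"
    and "poly x 0 = x0" and "poly y 0 = y0" and "poly z 0 = z0"
    and "degree x = 1" and "degree z = 1" and "degree y = 2"
  shows "egypt_identity (of_nat m) [:of_nat n0, of_nat n1:] x y z \<longleftrightarrow>
           (x, y, z) = sol_plus (of_nat n0) (of_nat n1) x0 y0 z0
         \<or> (x, y, z) = swap_xz (sol_plus (of_nat n0) (of_nat n1) z0 y0 x0)
         \<or> (x, y, z) = sol_minus (of_nat m) (of_nat n0) (of_nat n1) x0 y0 z0"
proof -
  define M :: rat where "M = of_nat m"
  define N0 :: rat where "N0 = of_nat n0"
  define N1 :: rat where "N1 = of_nat n1"
  have pos: "N0 > 0" "N1 > 0" "x0 > 0" "y0 > 0" "z0 > 0" "M > 0"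
    using assms by (simp_all add: N0_def N1_def M_def)
  have Mdef: "M = N0 * (1/x0 + 1/y0 + 1/z0)"
    using assms(7) pos by (simp add: M_def N0_def field_simps)
  have Mdef': "M = N0 * (1/z0 + 1/y0 + 1/x0)" using Mdef by (simp add: algebra_simps)
  define a where "a = coeff x 1"
  define c where "c = coeff z 1"
  define b1 where "b1 = coeff y 1"
  define b2 where "b2 = coeff y 2"
  have hx: "x = [:x0, a:]" using deg1_form[of x] assms(8,11) by (simp add: a_def poly_0_coeff_0)
  have hz: "z = [:z0, c:]" using deg1_form[of z] assms(10,12) by (simp add: c_def poly_0_coeff_0)
  have hy: "y = [:y0, b1, b2:]" using deg2_form[of y] assms(9,13) by (simp add: b1_def b2_def poly_0_coeff_0)
  have a0: "a \<noteq> 0" using assms(11) unfolding a_def by (metis leading_coeff_0_iff degree_0 one_neq_zero)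
  have c0: "c \<noteq> 0" using assms(12) unfolding c_def by (metis leading_coeff_0_iff degree_0 one_neq_zero)
  have b20: "b2 \<noteq> 0" using assms(13) unfolding b2_def by (metis leading_coeff_0_iff degree_0 zero_neq_numeral)
  have nz: "[:N0, N1:] \<noteq> 0" "x \<noteq> 0" "y \<noteq> 0" "z \<noteq> 0"
    using pos assms(11-13) by auto
  have E: "egypt_identity M [:N0, N1:] x y z \<longleftrightarrow> smult M (x*y*z) = [:N0, N1:]*(y*z + x*z + x*y)"
    by (rule ident_iff[OF nz])
  have swapP: "smult M (x*y*z) = [:N0, N1:]*(y*z + x*z + x*y) \<longleftrightarrow> smult M (z*y*x) = [:N0, N1:]*(y*x + z*x + z*y)"
  proof -
    have 1: "z*y*x = x*y*z" "y*x + z*x + z*y = y*z + x*z + x*y" by (simp_all add: ac_simps)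
    show ?thesis by (simp only: 1)
  qed
  have swp: "swap_xz (z, y, x) = (x, y, z)" by (simp add: swap_xz_def)
  have "egypt_identity M [:N0, N1:] x y z \<longleftrightarrow>
           (x, y, z) = sol_plus N0 N1 x0 y0 z0
         \<or> (x, y, z) = swap_xz (sol_plus N0 N1 z0 y0 x0)
         \<or> (x, y, z) = sol_minus M N0 N1 x0 y0 z0"
  proof
    assume "egypt_identity M [:N0, N1:] x y z"
    then have P: "smult M (x*y*z) = [:N0, N1:]*(y*z + x*z + x*y)" using E[THEN iffD1] by blast
    have P': "smult M (z*y*x) = [:N0, N1:]*(y*x + z*x + z*y)" using swapP[THEN iffD1, OF P] .
    show "(x, y, z) = sol_plus N0 N1 x0 y0 z0
         \<or> (x, y, z) = swap_xz (sol_plus N0 N1 z0 y0 x0)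
         \<or> (x, y, z) = sol_minus M N0 N1 x0 y0 z0"
    proof (cases "a*N0 = x0*N1")
      case True
      have "([:x0,a:],[:y0,b1,b2:],[:z0,c:]) = sol_plus N0 N1 x0 y0 z0"
        by (rule caseA[OF pos(1-5) Mdef b20 P[unfolded hx hy hz] True])
      then show ?thesis unfolding hx hy hz by (rule disjI1)
    next
      case nA: False
      show ?thesis
      proof (cases "c*N0 = z0*N1")
        case True
        have "([:z0,c:],[:y0,b1,b2:],[:x0,a:]) = sol_plus N0 N1 z0 y0 x0"
          by (rule caseA[OF pos(1,2) pos(5,4,3) Mdef' b20 P'[unfolded hx hy hz] True])
        then have "(z, y, x) = sol_plus N0 N1 z0 y0 x0" unfolding hx hy hz .
        then have "(x, y, z) = swap_xz (sol_plus N0 N1 z0 y0 x0)" using swp by metis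
        then show ?thesis by simp
      next
        case nC: False
        have N1z: "N1 \<noteq> 0" and Mz: "M \<noteq> 0" using pos by simp_all
        have "a*z0 = c*x0"
          by (rule rootlemma[OF N1z Mz b20 a0 c0 P[unfolded hx hy hz] nA nC])
        then have "([:x0,a:],[:y0,b1,b2:],[:z0,c:]) = sol_minus M N0 N1 x0 y0 z0"
          by (rule caseC[OF pos(1-5) Mdef b20 a0 c0 P[unfolded hx hy hz]])
        then show ?thesis unfolding hx hy hz by blast
      qed
    qed
  next
    assume H: "(x, y, z) = sol_plus N0 N1 x0 y0 z0
         \<or> (x, y, z) = swap_xz (sol_plus N0 N1 z0 y0 x0)
         \<or> (x, y, z) = sol_minus M N0 N1 x0 y0 z0"
    from H have "smult M (x*y*z) = [:N0, N1:]*(y*z + x*z + x*y)"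
    proof (elim disjE)
      assume "(x, y, z) = sol_plus N0 N1 x0 y0 z0"
      then show ?thesis by (rule ver_plus[OF pos(1) pos(3-5) Mdef])
    next
      assume "(x, y, z) = swap_xz (sol_plus N0 N1 z0 y0 x0)"
      then have "(z, y, x) = sol_plus N0 N1 z0 y0 x0"
        by (cases "sol_plus N0 N1 z0 y0 x0") (simp add: swap_xz_def)
      then have "smult M (z*y*x) = [:N0, N1:]*(y*x + z*x + z*y)"
        by (rule ver_plus[OF pos(1) pos(5,4,3) Mdef'])
      then show ?thesis using swapP[THEN iffD2] by blast
    next
      assume "(x, y, z) = sol_minus M N0 N1 x0 y0 z0"
      then show ?thesis by (rule ver_minus[OF pos(1) pos(3-5) Mdef])
    qed
    then show "egypt_identity M [:N0, N1:] x y z" using E[THEN iffD2] by blast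
  qed
  then show ?thesis by (simp add: M_def N0_def N1_def)
qed

end
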